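(* If $A$ and $B$ are finitely generated left-orderable groups that are both Prieto, then $A\times B$ is Prieto.
   Context: A positive cone of a group $G$ is a subsemigroup $P$ with $G=P\sqcup P^{-1}\sqcup\{1\}$. A finitely generated left-orderable group $G$ is Prieto if every positive cone of $G$ is coarsely connected with respect to the word metric $d_X$ of some (equivalently any) finite generating set $X$, i.e. for each positive cone $P$ there is $r\ge1$ such that any two elements of $P$ are joined by a sequence $p_0,\dots,p_n$ in $P$ with $d_X(p_i,p_{i+1})\le r$. *)

theory Defs
  imports "HOL-Algebra.Algebra"
begin

definition fin_gen_set :: "('a, 'b) monoid_scheme \<Rightarrow> 'a set \<Rightarrow> bool" where
  "fin_gen_set M Gen \<longleftrightarrow> finite Gen \<and> Gen \<subseteq> carrier M \<and> generate M Gen = carrier M"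

definition finitely_generated :: "('a, 'b) monoid_scheme \<Rightarrow> bool" where
  "finitely_generated M \<longleftrightarrow> (\<exists>Gen. fin_gen_set M Gen)"

definition word_length :: "('a, 'b) monoid_scheme \<Rightarrow> 'a set \<Rightarrow> 'a \<Rightarrow> nat" where
  "word_length M Gen g = (LEAST n. \<exists>ws. set ws \<subseteq> Gen \<union> (\<lambda>x. inv\<^bsub>M\<^esub> x) ` Gen \<and> length ws = n
      \<and> foldr (\<lambda>x y. x \<otimes>\<^bsub>M\<^esub> y) ws \<one>\<^bsub>M\<^esub> = g)"

definition word_dist :: "('a, 'b) monoid_scheme \<Rightarrow> 'a set \<Rightarrow> 'a \<Rightarrow> 'a \<Rightarrow> nat" where
  "word_dist M Gen g h = word_length M Gen (inv\<^bsub>M\<^esub> g \<otimes>\<^bsub>M\<^esub> h)"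

definition positive_cone :: "('a, 'b) monoid_scheme \<Rightarrow> 'a set \<Rightarrow> bool" where
  "positive_cone M P \<longleftrightarrow> P \<subseteq> carrier M
     \<and> (\<forall>p\<in>P. \<forall>q\<in>P. p \<otimes>\<^bsub>M\<^esub> q \<in> P)
     \<and> carrier M = P \<union> (\<lambda>x. inv\<^bsub>M\<^esub> x) ` P \<union> {\<one>\<^bsub>M\<^esub>}
     \<and> P \<inter> (\<lambda>x. inv\<^bsub>M\<^esub> x) ` P = {}
     \<and> \<one>\<^bsub>M\<^esub> \<notin> P \<and> \<one>\<^bsub>M\<^esub> \<notin> (\<lambda>x. inv\<^bsub>M\<^esub> x) ` P"

definition left_orderable :: "('a, 'b) monoid_scheme \<Rightarrow> bool" where
  "left_orderable M \<longleftrightarrow> (\<exists>P. positive_cone M P)"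

definition coarsely_connected :: "('a, 'b) monoid_scheme \<Rightarrow> 'a set \<Rightarrow> 'a set \<Rightarrow> bool" where
  "coarsely_connected M Gen S \<longleftrightarrow> (\<exists>r::nat. r \<ge> 1 \<and> (\<forall>p\<in>S. \<forall>q\<in>S. \<exists>ps. ps \<noteq> []
      \<and> hd ps = p \<and> last ps = q \<and> set ps \<subseteq> S
      \<and> (\<forall>i. Suc i < length ps \<longrightarrow> word_dist M Gen (ps ! i) (ps ! Suc i) \<le> r)))"

definition Prieto :: "('a, 'b) monoid_scheme \<Rightarrow> bool" where
  "Prieto M \<longleftrightarrow> (\<exists>Gen. fin_gen_set M Gen \<and> (\<forall>P. positive_cone M P \<longrightarrow> coarsely_connected M Gen P))"

end

theory Submission
  imports Defs
begin


inductive reach :: "('a, 'b) monoid_scheme \<Rightarrow> 'a set \<Rightarrow> 'a set \<Rightarrow> nat \<Rightarrow> 'a \<Rightarrow> 'a \<Rightarrow> bool"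
  for M Gen S r where
  rrefl: "p \<in> S \<Longrightarrow> reach M Gen S r p p"
| rstep: "reach M Gen S r p q \<Longrightarrow> s \<in> S \<Longrightarrow> word_dist M Gen q s \<le> r \<Longrightarrow> reach M Gen S r p s"

lemma reach_in: "reach M Gen S r p q \<Longrightarrow> p \<in> S \<and> q \<in> S"
  by (induction rule: reach.induct) auto

lemma reach_trans: "reach M Gen S r q s \<Longrightarrow> reach M Gen S r p q \<Longrightarrow> reach M Gen S r p s"
  by (induction rule: reach.induct) (auto intro: reach.rstep)

lemma reach_cons: "reach M Gen S r q s \<Longrightarrow> p \<in> S \<Longrightarrow> word_dist M Gen p q \<le> r \<Longrightarrow> reach M Gen S r p s"
  by (metis reach.rrefl reach.rstep reach_in reach_trans)

lemma reach_mono: "reach M Gen S r p q \<Longrightarrow> r \<le> r' \<Longrightarrow> reach M Gen S r' p q"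
  by (induction rule: reach.induct) (auto intro: reach.intros)

lemma path_reach:
  "ps \<noteq> [] \<Longrightarrow> set ps \<subseteq> S \<Longrightarrow> (\<forall>i. Suc i < length ps \<longrightarrow> word_dist M Gen (ps ! i) (ps ! Suc i) \<le> r)
   \<Longrightarrow> reach M Gen S r (hd ps) (last ps)"
proof (induction ps)
  case Nil
  then show ?case by simp
next
  case (Cons x ps)
  show ?case
  proof (cases "ps = []")
    case True
    then show ?thesis using Cons by (auto intro: reach.rrefl)
  next
    case False
    have steps: "\<forall>i. Suc i < length ps \<longrightarrow> word_dist M Gen (ps ! i) (ps ! Suc i) \<le> r"
    proof (intro allI impI)
      fix i assume "Suc i < length ps"
      then have "Suc (Suc i) < length (x # ps)" by simp
      then show "word_dist M Gen (ps ! i) (ps ! Suc i) \<le> r" using Cons.prems(3) by fastforce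
    qed
    have "reach M Gen S r (hd ps) (last ps)" using Cons False steps by auto
    moreover have "word_dist M Gen x (hd ps) \<le> r"
      using Cons.prems(3) False by (metis hd_conv_nth length_Cons length_greater_0_conv nth_Cons_0 nth_Cons_Suc zero_less_Suc Suc_less_eq)
    ultimately show ?thesis using Cons False by (auto intro: reach_cons)
  qed
qed

lemma reach_path:
  "reach M Gen S r p q \<Longrightarrow> \<exists>ps. ps \<noteq> [] \<and> hd ps = p \<and> last ps = q \<and> set ps \<subseteq> S
      \<and> (\<forall>i. Suc i < length ps \<longrightarrow> word_dist M Gen (ps ! i) (ps ! Suc i) \<le> r)"
proof (induction rule: reach.induct)
  case (rrefl p)
  then show ?case by (intro exI[of _ "[p]"]) auto
next
  case (rstep p q s)
  then obtain ps where ps: "ps \<noteq> []" "hd ps = p" "last ps = q" "set ps \<subseteq> S"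
    "\<forall>i. Suc i < length ps \<longrightarrow> word_dist M Gen (ps ! i) (ps ! Suc i) \<le> r" by blast
  show ?case
  proof (intro exI[of _ "ps @ [s]"] conjI allI impI)
    fix i assume i: "Suc i < length (ps @ [s])"
    show "word_dist M Gen ((ps @ [s]) ! i) ((ps @ [s]) ! Suc i) \<le> r"
    proof (cases "Suc i < length ps")
      case True
      then show ?thesis using ps(5) by (simp add: nth_append)
    next
      case False
      then have "Suc i = length ps" using i by simp
      then have ii: "i = length ps - 1" by simp
      then have "(ps @ [s]) ! i = q" "(ps @ [s]) ! Suc i = s"
        using ps(1,3) ii by (auto simp: nth_append last_conv_nth)
      then show ?thesis using rstep by simp
    qed
  qed (use ps rstep in auto)
qed

lemma foldr_mult:
  assumes "group M" "set ws \<subseteq> carrier M" "y \<in> carrier M"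
  shows "foldr (\<lambda>x y. x \<otimes>\<^bsub>M\<^esub> y) ws y = foldr (\<lambda>x y. x \<otimes>\<^bsub>M\<^esub> y) ws \<one>\<^bsub>M\<^esub> \<otimes>\<^bsub>M\<^esub> y
     \<and> foldr (\<lambda>x y. x \<otimes>\<^bsub>M\<^esub> y) ws \<one>\<^bsub>M\<^esub> \<in> carrier M"
  using assms(2)
proof (induction ws)
  case Nil
  then show ?case using assms by (simp add: group.is_monoid monoid.l_one)
next
  case (Cons a ws)
  interpret group M by fact
  from Cons show ?case using assms(3) by (auto simp: m_assoc)
qed

lemma word_exists:
  assumes "group M" "Gen \<subseteq> carrier M" "g \<in> generate M Gen"
  shows "\<exists>ws. set ws \<subseteq> Gen \<union> (\<lambda>x. inv\<^bsub>M\<^esub> x) ` Gen \<and> foldr (\<lambda>x y. x \<otimes>\<^bsub>M\<^esub> y) ws \<one>\<^bsub>M\<^esub> = g"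
  using assms(3)
proof (induction rule: generate.induct)
  case one
  then show ?case by (intro exI[of _ "[]"]) auto
next
  case (incl h)
  then show ?case using assms by (intro exI[of _ "[h]"]) (auto simp: group.is_monoid monoid.r_one subsetD)
next
  case (inv h)
  then show ?case using assms by (intro exI[of _ "[inv\<^bsub>M\<^esub> h]"]) (auto simp: group.is_monoid monoid.r_one subsetD group.inv_closed)
next
  case (eng h1 h2)
  then obtain ws1 ws2 where w: "set ws1 \<subseteq> Gen \<union> (\<lambda>x. inv\<^bsub>M\<^esub> x) ` Gen" "foldr (\<lambda>x y. x \<otimes>\<^bsub>M\<^esub> y) ws1 \<one>\<^bsub>M\<^esub> = h1"
    "set ws2 \<subseteq> Gen \<union> (\<lambda>x. inv\<^bsub>M\<^esub> x) ` Gen" "foldr (\<lambda>x y. x \<otimes>\<^bsub>M\<^esub> y) ws2 \<one>\<^bsub>M\<^esub> = h2" by blast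
  have sub: "Gen \<union> (\<lambda>x. inv\<^bsub>M\<^esub> x) ` Gen \<subseteq> carrier M" using assms by (auto intro: group.inv_closed)
  have s1: "set ws1 \<subseteq> carrier M" "set ws2 \<subseteq> carrier M" using w(1,3) sub by blast+
  have h2c: "h2 \<in> carrier M" using foldr_mult[OF assms(1) s1(2), of "\<one>\<^bsub>M\<^esub>"] w(4) assms(1)
    by (simp add: group.is_monoid monoid.one_closed)
  have "foldr (\<lambda>x y. x \<otimes>\<^bsub>M\<^esub> y) (ws1 @ ws2) \<one>\<^bsub>M\<^esub> = h1 \<otimes>\<^bsub>M\<^esub> h2"
    using foldr_mult[OF assms(1) s1(1) h2c] w by simp
  then show ?case using w by (intro exI[of _ "ws1 @ ws2"]) auto
qed

lemma word_length_witness: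
  assumes "group M" "fin_gen_set M Gen" "g \<in> carrier M"
  shows "\<exists>ws. set ws \<subseteq> Gen \<union> (\<lambda>x. inv\<^bsub>M\<^esub> x) ` Gen \<and> length ws = word_length M Gen g
     \<and> foldr (\<lambda>x y. x \<otimes>\<^bsub>M\<^esub> y) ws \<one>\<^bsub>M\<^esub> = g"
proof -
  obtain ws where "set ws \<subseteq> Gen \<union> (\<lambda>x. inv\<^bsub>M\<^esub> x) ` Gen" "foldr (\<lambda>x y. x \<otimes>\<^bsub>M\<^esub> y) ws \<one>\<^bsub>M\<^esub> = g"
    using word_exists[OF assms(1), of Gen g] assms(2,3) unfolding fin_gen_set_def by auto
  then have ex: "\<exists>n. \<exists>ws. set ws \<subseteq> Gen \<union> (\<lambda>x. inv\<^bsub>M\<^esub> x) ` Gen \<and> length ws = n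
     \<and> foldr (\<lambda>x y. x \<otimes>\<^bsub>M\<^esub> y) ws \<one>\<^bsub>M\<^esub> = g" by blast
  show ?thesis unfolding word_length_def by (rule LeastI_ex[OF ex])
qed

lemma word_length_le:
  assumes "set ws \<subseteq> Gen \<union> (\<lambda>x. inv\<^bsub>M\<^esub> x) ` Gen" "foldr (\<lambda>x y. x \<otimes>\<^bsub>M\<^esub> y) ws \<one>\<^bsub>M\<^esub> = g"
  shows "word_length M Gen g \<le> length ws"
  unfolding word_length_def by (rule Least_le) (use assms in blast)



lemma word_dist_transl:
  assumes "group G" "g \<in> carrier G" "x \<in> carrier G" "y \<in> carrier G"
  shows "word_dist G Gen (g \<otimes>\<^bsub>G\<^esub> x) (g \<otimes>\<^bsub>G\<^esub> y) = word_dist G Gen x y"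
proof -
  interpret group G by fact
  have "inv\<^bsub>G\<^esub> (g \<otimes>\<^bsub>G\<^esub> x) \<otimes>\<^bsub>G\<^esub> (g \<otimes>\<^bsub>G\<^esub> y) = inv\<^bsub>G\<^esub> x \<otimes>\<^bsub>G\<^esub> y"
    using assms by (simp add: inv_mult_group m_assoc[symmetric]) (simp add: m_assoc)
  then show ?thesis unfolding word_dist_def by simp
qed

lemma gen_left:
  assumes "group A" "group B" "GA \<subseteq> carrier A" "a \<in> generate A GA"
  shows "(a, \<one>\<^bsub>B\<^esub>) \<in> generate (A \<times>\<times> B) ((\<lambda>a. (a, \<one>\<^bsub>B\<^esub>)) ` GA \<union> (\<lambda>b. (\<one>\<^bsub>A\<^esub>, b)) ` GB)"
  using assms(4)
proof (induction rule: generate.induct)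
  case one
  then show ?case using generate.one[of "A \<times>\<times> B"] by simp
next
  case (incl h)
  then show ?case by (auto intro: generate.incl)
next
  case (inv h)
  then have "(inv\<^bsub>A\<^esub> h, \<one>\<^bsub>B\<^esub>) = inv\<^bsub>A \<times>\<times> B\<^esub> (h, \<one>\<^bsub>B\<^esub>)"
    using assms by (simp add: subsetD group.is_monoid monoid.one_closed group.is_monoid monoid.inv_one)
  then show ?case using inv by (auto intro: generate.inv)
next
  case (eng h1 h2)
  have eq: "(h1 \<otimes>\<^bsub>A\<^esub> h2, \<one>\<^bsub>B\<^esub>) = (h1, \<one>\<^bsub>B\<^esub>) \<otimes>\<^bsub>A \<times>\<times> B\<^esub> (h2, \<one>\<^bsub>B\<^esub>)"
    using assms by (simp add: group.is_monoid monoid.one_closed monoid.l_one)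
  show ?case unfolding eq using eng by (blast intro: generate.eng)
qed

lemma gen_right:
  assumes "group A" "group B" "GB \<subseteq> carrier B" "b \<in> generate B GB"
  shows "(\<one>\<^bsub>A\<^esub>, b) \<in> generate (A \<times>\<times> B) ((\<lambda>a. (a, \<one>\<^bsub>B\<^esub>)) ` GA \<union> (\<lambda>b. (\<one>\<^bsub>A\<^esub>, b)) ` GB)"
  using assms(4)
proof (induction rule: generate.induct)
  case one
  then show ?case using generate.one[of "A \<times>\<times> B"] by simp
next
  case (incl h)
  then show ?case by (auto intro: generate.incl)
next
  case (inv h)
  then have "(\<one>\<^bsub>A\<^esub>, inv\<^bsub>B\<^esub> h) = inv\<^bsub>A \<times>\<times> B\<^esub> (\<one>\<^bsub>A\<^esub>, h)"
    using assms by (simp add: subsetD group.is_monoid monoid.one_closed group.is_monoid monoid.inv_one)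
  then show ?case using inv by (auto intro: generate.inv)
next
  case (eng h1 h2)
  have eq: "(\<one>\<^bsub>A\<^esub>, h1 \<otimes>\<^bsub>B\<^esub> h2) = (\<one>\<^bsub>A\<^esub>, h1) \<otimes>\<^bsub>A \<times>\<times> B\<^esub> (\<one>\<^bsub>A\<^esub>, h2)"
    using assms by (simp add: group.is_monoid monoid.one_closed monoid.l_one)
  show ?case unfolding eq using eng by (blast intro: generate.eng)
qed

lemma dp_fin_gen:
  assumes "group A" "group B" "fin_gen_set A GA" "fin_gen_set B GB"
  shows "fin_gen_set (A \<times>\<times> B) ((\<lambda>a. (a, \<one>\<^bsub>B\<^esub>)) ` GA \<union> (\<lambda>b. (\<one>\<^bsub>A\<^esub>, b)) ` GB)"
    (is "fin_gen_set ?G ?Gen")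
proof -
  interpret A: group A by fact
  interpret B: group B by fact
  interpret G: group ?G by (rule DirProd_group[OF assms(1,2)])
  have sub: "?Gen \<subseteq> carrier ?G" using assms(3,4) unfolding fin_gen_set_def by auto
  have "carrier ?G \<subseteq> generate ?G ?Gen"
  proof
    fix x assume "x \<in> carrier ?G"
    then obtain a b where x: "x = (a, b)" "a \<in> carrier A" "b \<in> carrier B" by auto
    have "(a, \<one>\<^bsub>B\<^esub>) \<in> generate ?G ?Gen"
      using gen_left[OF assms(1,2)] assms(3) x unfolding fin_gen_set_def by auto
    moreover have "(\<one>\<^bsub>A\<^esub>, b) \<in> generate ?G ?Gen"
      using gen_right[OF assms(1,2)] assms(4) x unfolding fin_gen_set_def by auto
    ultimately have "(a, \<one>\<^bsub>B\<^esub>) \<otimes>\<^bsub>?G\<^esub> (\<one>\<^bsub>A\<^esub>, b) \<in> generate ?G ?Gen" by (rule generate.eng)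
    then show "x \<in> generate ?G ?Gen" using x by simp
  qed
  then show ?thesis using G.generate_incl[OF sub] sub assms(3,4) unfolding fin_gen_set_def by auto
qed

lemma wl_right:
  assumes "group A" "group B" "fin_gen_set B GB" "b \<in> carrier B"
  shows "word_length (A \<times>\<times> B) ((\<lambda>a. (a, \<one>\<^bsub>B\<^esub>)) ` GA \<union> (\<lambda>b. (\<one>\<^bsub>A\<^esub>, b)) ` GB) (\<one>\<^bsub>A\<^esub>, b)
         \<le> word_length B GB b" (is "word_length ?G ?Gen _ \<le> _")
proof -
  interpret A: group A by fact
  interpret B: group B by fact
  obtain ws where ws: "set ws \<subseteq> GB \<union> (\<lambda>x. inv\<^bsub>B\<^esub> x) ` GB" "length ws = word_length B GB b"
     "foldr (\<lambda>x y. x \<otimes>\<^bsub>B\<^esub> y) ws \<one>\<^bsub>B\<^esub> = b"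
    using word_length_witness[OF assms(2,3,4)] by blast
  have GBc: "GB \<subseteq> carrier B" using assms(3) unfolding fin_gen_set_def by auto
  have "set (map (\<lambda>x. (\<one>\<^bsub>A\<^esub>, x)) ws) \<subseteq> ?Gen \<union> (\<lambda>x. inv\<^bsub>?G\<^esub> x) ` ?Gen"
  proof
    fix z assume "z \<in> set (map (\<lambda>x. (\<one>\<^bsub>A\<^esub>, x)) ws)"
    then obtain x where z: "z = (\<one>\<^bsub>A\<^esub>, x)" "x \<in> set ws" by auto
    then consider "x \<in> GB" | y where "y \<in> GB" "x = inv\<^bsub>B\<^esub> y" using ws(1) by auto
    then show "z \<in> ?Gen \<union> (\<lambda>x. inv\<^bsub>?G\<^esub> x) ` ?Gen"
    proof cases
      case 1 then show ?thesis using z by auto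
    next
      case 2
      then have "z = inv\<^bsub>?G\<^esub> (\<one>\<^bsub>A\<^esub>, y)" using z GBc assms(1,2) by auto
      then show ?thesis using 2 by auto
    qed
  qed
  moreover have "set xs \<subseteq> carrier B \<Longrightarrow>
      foldr (\<lambda>x y. x \<otimes>\<^bsub>?G\<^esub> y) (map (\<lambda>x. (\<one>\<^bsub>A\<^esub>, x)) xs) \<one>\<^bsub>?G\<^esub> = (\<one>\<^bsub>A\<^esub>, foldr (\<lambda>x y. x \<otimes>\<^bsub>B\<^esub> y) xs \<one>\<^bsub>B\<^esub>)" for xs
    by (induction xs) auto
  moreover have "set ws \<subseteq> carrier B" using ws(1) GBc by auto
  ultimately show ?thesis using word_length_le[of "map (\<lambda>x. (\<one>\<^bsub>A\<^esub>, x)) ws" ?Gen ?G] ws by auto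
qed

lemma wl_left:
  assumes "group A" "group B" "fin_gen_set A GA" "a \<in> carrier A"
  shows "word_length (A \<times>\<times> B) ((\<lambda>a. (a, \<one>\<^bsub>B\<^esub>)) ` GA \<union> (\<lambda>b. (\<one>\<^bsub>A\<^esub>, b)) ` GB) (a, \<one>\<^bsub>B\<^esub>)
         \<le> word_length A GA a" (is "word_length ?G ?Gen _ \<le> _")
proof -
  interpret A: group A by fact
  interpret B: group B by fact
  obtain ws where ws: "set ws \<subseteq> GA \<union> (\<lambda>x. inv\<^bsub>A\<^esub> x) ` GA" "length ws = word_length A GA a"
     "foldr (\<lambda>x y. x \<otimes>\<^bsub>A\<^esub> y) ws \<one>\<^bsub>A\<^esub> = a"
    using word_length_witness[OF assms(1,3,4)] by blast
  have GAc: "GA \<subseteq> carrier A" using assms(3) unfolding fin_gen_set_def by auto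
  have "set (map (\<lambda>x. (x, \<one>\<^bsub>B\<^esub>)) ws) \<subseteq> ?Gen \<union> (\<lambda>x. inv\<^bsub>?G\<^esub> x) ` ?Gen"
  proof
    fix z assume "z \<in> set (map (\<lambda>x. (x, \<one>\<^bsub>B\<^esub>)) ws)"
    then obtain x where z: "z = (x, \<one>\<^bsub>B\<^esub>)" "x \<in> set ws" by auto
    then consider "x \<in> GA" | y where "y \<in> GA" "x = inv\<^bsub>A\<^esub> y" using ws(1) by auto
    then show "z \<in> ?Gen \<union> (\<lambda>x. inv\<^bsub>?G\<^esub> x) ` ?Gen"
    proof cases
      case 1 then show ?thesis using z by auto
    next
      case 2
      then have "z = inv\<^bsub>?G\<^esub> (y, \<one>\<^bsub>B\<^esub>)" using z GAc assms(1,2) by auto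
      then show ?thesis using 2 by auto
    qed
  qed
  moreover have "set xs \<subseteq> carrier A \<Longrightarrow>
      foldr (\<lambda>x y. x \<otimes>\<^bsub>?G\<^esub> y) (map (\<lambda>x. (x, \<one>\<^bsub>B\<^esub>)) xs) \<one>\<^bsub>?G\<^esub> = (foldr (\<lambda>x y. x \<otimes>\<^bsub>A\<^esub> y) xs \<one>\<^bsub>A\<^esub>, \<one>\<^bsub>B\<^esub>)" for xs
    by (induction xs) auto
  moreover have "set ws \<subseteq> carrier A" using ws(1) GAc by auto
  ultimately show ?thesis using word_length_le[of "map (\<lambda>x. (x, \<one>\<^bsub>B\<^esub>)) ws" ?Gen ?G] ws by auto
qed



lemma move:
  assumes G: "group G"
  and closed: "\<forall>p\<in>P. \<forall>q\<in>P. p \<otimes>\<^bsub>G\<^esub> q \<in> P" and PG: "P \<subseteq> carrier G"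
  and fP: "\<forall>x\<in>PH. f x \<in> P"
  and fd: "\<forall>x\<in>PH. \<forall>y\<in>PH. word_dist G Gen (f x) (f y) \<le> word_dist H GH x y"
  and cc: "\<forall>p\<in>PH. \<forall>q\<in>PH. \<exists>ps. ps \<noteq> [] \<and> hd ps = p \<and> last ps = q \<and> set ps \<subseteq> PH
      \<and> (\<forall>i. Suc i < length ps \<longrightarrow> word_dist H GH (ps ! i) (ps ! Suc i) \<le> rH)"
  and rH: "rH \<le> R" and ee: "ee \<in> PH"
  and d1: "word_dist G Gen \<one>\<^bsub>G\<^esub> (f ee) \<le> R" and d2: "word_dist G Gen (f ee) \<one>\<^bsub>G\<^esub> \<le> R"
  and g: "g \<in> P" and c: "c \<in> PH"
  shows "reach G Gen P R g (g \<otimes>\<^bsub>G\<^esub> f c) \<and> reach G Gen P R (g \<otimes>\<^bsub>G\<^esub> f c) g"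
proof -
  interpret group G by fact
  have gc: "g \<in> carrier G" using g PG by auto
  have transl: "reach G Gen P R (g \<otimes>\<^bsub>G\<^esub> f x) (g \<otimes>\<^bsub>G\<^esub> f y)" if "reach H GH PH rH x y" for x y
    using that
  proof (induction rule: reach.induct)
    case (rrefl p)
    then show ?case using closed fP g by (auto intro: reach.rrefl)
  next
    case (rstep p q s)
    have q: "q \<in> PH" using reach_in[OF rstep.hyps(1)] by auto
    have fqs: "f q \<in> carrier G" "f s \<in> carrier G" using fP PG q rstep.hyps(2) by auto
    have "word_dist G Gen (g \<otimes>\<^bsub>G\<^esub> f q) (g \<otimes>\<^bsub>G\<^esub> f s) = word_dist G Gen (f q) (f s)"
      using word_dist_transl[OF G gc fqs] .
    also have "\<dots> \<le> R" using fd q rstep.hyps(2,3) rH by force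
    finally show ?case using rstep closed fP g by (auto intro: reach.rstep)
  qed
  have pb: "reach H GH PH rH ee c" "reach H GH PH rH c ee"
    using cc ee c path_reach by metis+
  have fb0: "f ee \<in> carrier G" "f ee \<in> P" using fP PG ee by auto
  have w1: "word_dist G Gen g (g \<otimes>\<^bsub>G\<^esub> f ee) \<le> R"
    using word_dist_transl[OF G gc one_closed fb0(1)] d1 gc by simp
  have w2: "word_dist G Gen (g \<otimes>\<^bsub>G\<^esub> f ee) g \<le> R"
    using word_dist_transl[OF G gc fb0(1) one_closed] d2 gc by simp
  have "reach G Gen P R g (g \<otimes>\<^bsub>G\<^esub> f ee)"
    using reach.rstep[OF reach.rrefl[OF g] _ w1] closed g fb0 by auto
  then have r1: "reach G Gen P R g (g \<otimes>\<^bsub>G\<^esub> f c)" using transl[OF pb(1)] reach_trans by metis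
  have "reach G Gen P R (g \<otimes>\<^bsub>G\<^esub> f c) g"
    using reach.rstep[OF transl[OF pb(2)] g w2] .
  then show ?thesis using r1 by simp
qed

lemma restrict_cone:
  assumes G: "group G" and H: "group H" and pc: "positive_cone G P"
  and fc: "\<forall>x\<in>carrier H. f x \<in> carrier G"
  and fm: "\<forall>x\<in>carrier H. \<forall>y\<in>carrier H. f (x \<otimes>\<^bsub>H\<^esub> y) = f x \<otimes>\<^bsub>G\<^esub> f y"
  and finj: "\<forall>x\<in>carrier H. f x = \<one>\<^bsub>G\<^esub> \<longrightarrow> x = \<one>\<^bsub>H\<^esub>"
  shows "positive_cone H {x \<in> carrier H. f x \<in> P}"
proof -
  interpret G: group G by fact
  interpret H: group H by fact
  have f1: "f \<one>\<^bsub>H\<^esub> = \<one>\<^bsub>G\<^esub>"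
  proof -
    have "f \<one>\<^bsub>H\<^esub> \<otimes>\<^bsub>G\<^esub> f \<one>\<^bsub>H\<^esub> = f \<one>\<^bsub>H\<^esub>" using fm by (metis H.l_one H.one_closed)
    then show ?thesis using fc by (metis G.l_cancel_one H.one_closed)
  qed
  have finv: "f (inv\<^bsub>H\<^esub> x) = inv\<^bsub>G\<^esub> f x" if "x \<in> carrier H" for x
  proof -
    have "f (inv\<^bsub>H\<^esub> x) \<otimes>\<^bsub>G\<^esub> f x = \<one>\<^bsub>G\<^esub>" using fm that f1 by (metis H.inv_closed H.l_inv)
    then show ?thesis using fc that by (metis G.inv_equality H.inv_closed)
  qed
  from pc have PG: "P \<subseteq> carrier G" and cl: "\<forall>p\<in>P. \<forall>q\<in>P. p \<otimes>\<^bsub>G\<^esub> q \<in> P"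
    and cov: "carrier G = P \<union> (\<lambda>x. inv\<^bsub>G\<^esub> x) ` P \<union> {\<one>\<^bsub>G\<^esub>}"
    and dis: "P \<inter> (\<lambda>x. inv\<^bsub>G\<^esub> x) ` P = {}" and o1: "\<one>\<^bsub>G\<^esub> \<notin> P"
    unfolding positive_cone_def by auto
  let ?Q = "{x \<in> carrier H. f x \<in> P}"
  have "carrier H \<subseteq> ?Q \<union> (\<lambda>x. inv\<^bsub>H\<^esub> x) ` ?Q \<union> {\<one>\<^bsub>H\<^esub>}"
  proof
    fix a assume a: "a \<in> carrier H"
    then have "f a \<in> carrier G" using fc by auto
    then consider "f a \<in> P" | x where "x \<in> P" "f a = inv\<^bsub>G\<^esub> x" | "f a = \<one>\<^bsub>G\<^esub>" using cov by auto
    then show "a \<in> ?Q \<union> (\<lambda>x. inv\<^bsub>H\<^esub> x) ` ?Q \<union> {\<one>\<^bsub>H\<^esub>}"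
    proof cases
      case 1 then show ?thesis using a by auto
    next
      case 2
      then have "f (inv\<^bsub>H\<^esub> a) = x" using finv a PG by auto
      then have "inv\<^bsub>H\<^esub> a \<in> ?Q" using 2 a by auto
      moreover have "a = inv\<^bsub>H\<^esub> (inv\<^bsub>H\<^esub> a)" using a by simp
      ultimately show ?thesis by blast
    next
      case 3 then show ?thesis using finj a by auto
    qed
  qed
  moreover have "?Q \<union> (\<lambda>x. inv\<^bsub>H\<^esub> x) ` ?Q \<union> {\<one>\<^bsub>H\<^esub>} \<subseteq> carrier H" by auto
  moreover have "?Q \<inter> (\<lambda>x. inv\<^bsub>H\<^esub> x) ` ?Q = {}"
  proof (rule ccontr)
    assume "?Q \<inter> (\<lambda>x. inv\<^bsub>H\<^esub> x) ` ?Q \<noteq> {}"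
    then obtain a' where a': "a' \<in> ?Q" "inv\<^bsub>H\<^esub> a' \<in> ?Q" by auto
    then have "f (inv\<^bsub>H\<^esub> a') = inv\<^bsub>G\<^esub> f a'" using finv by auto
    then show False using a' dis by auto
  qed
  moreover have "\<forall>p\<in>?Q. \<forall>q\<in>?Q. p \<otimes>\<^bsub>H\<^esub> q \<in> ?Q" using fm cl by auto
  moreover have "\<one>\<^bsub>H\<^esub> \<notin> ?Q" using f1 o1 by auto
  moreover have "\<one>\<^bsub>H\<^esub> \<notin> (\<lambda>x. inv\<^bsub>H\<^esub> x) ` ?Q"
  proof
    assume "\<one>\<^bsub>H\<^esub> \<in> (\<lambda>x. inv\<^bsub>H\<^esub> x) ` ?Q"
    then obtain a where "a \<in> ?Q" "\<one>\<^bsub>H\<^esub> = inv\<^bsub>H\<^esub> a" by auto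
    then have "a = \<one>\<^bsub>H\<^esub>" by (metis (no_types, lifting) H.inv_inv H.inv_one mem_Collect_eq)
    then show False using \<open>a \<in> ?Q\<close> f1 o1 by auto
  qed
  ultimately show ?thesis unfolding positive_cone_def by blast
qed

lemma cone_max:
  assumes H: "group H" and pc: "positive_cone H Q" and a: "a \<in> carrier H" and a': "a' \<in> carrier H"
  shows "\<exists>u\<in>carrier H. (u = a \<or> inv\<^bsub>H\<^esub> a \<otimes>\<^bsub>H\<^esub> u \<in> Q) \<and> (u = a' \<or> inv\<^bsub>H\<^esub> a' \<otimes>\<^bsub>H\<^esub> u \<in> Q)"
proof -
  interpret group H by fact
  have cov: "carrier H = Q \<union> (\<lambda>x. inv\<^bsub>H\<^esub> x) ` Q \<union> {\<one>\<^bsub>H\<^esub>}" and QH: "Q \<subseteq> carrier H"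
    using pc unfolding positive_cone_def by auto
  have "inv\<^bsub>H\<^esub> a \<otimes>\<^bsub>H\<^esub> a' \<in> carrier H" using a a' by auto
  then consider "inv\<^bsub>H\<^esub> a \<otimes>\<^bsub>H\<^esub> a' \<in> Q" | y where "y \<in> Q" "inv\<^bsub>H\<^esub> a \<otimes>\<^bsub>H\<^esub> a' = inv\<^bsub>H\<^esub> y"
     | "inv\<^bsub>H\<^esub> a \<otimes>\<^bsub>H\<^esub> a' = \<one>\<^bsub>H\<^esub>" using cov by blast
  then show ?thesis
  proof cases
    case 1 then show ?thesis using a' by auto
  next
    case 2
    then have "inv\<^bsub>H\<^esub> a' \<otimes>\<^bsub>H\<^esub> a = y"
      using a a' QH by (metis inv_inv inv_mult_group inv_closed subsetD)
    then show ?thesis using a 2 by auto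
  next
    case 3
    then have "a = a'" using a a' by (metis inv_closed inv_equality inv_inv)
    then show ?thesis using a by auto
  qed
qed



theorem proposition4p17:
  fixes A :: "('a, 'c) monoid_scheme" and B :: "('b, 'd) monoid_scheme"
  assumes "group A" and "group B"
    and "finitely_generated A" and "finitely_generated B"
    and "left_orderable A" and "left_orderable B"
    and "Prieto A" and "Prieto B"
  shows "Prieto (A \<times>\<times> B)"
proof -
  interpret A: group A by fact
  interpret B: group B by fact
  let ?G = "A \<times>\<times> B"
  interpret G: group ?G by (rule DirProd_group[OF assms(1,2)])
  obtain GA where GA: "fin_gen_set A GA" and ccA: "\<And>Q. positive_cone A Q \<Longrightarrow> coarsely_connected A GA Q"
    using assms(7) unfolding Prieto_def by blast
  obtain GB where GB: "fin_gen_set B GB" and ccB: "\<And>Q. positive_cone B Q \<Longrightarrow> coarsely_connected B GB Q"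
    using assms(8) unfolding Prieto_def by blast
  define Gen where "Gen = (\<lambda>a. (a, \<one>\<^bsub>B\<^esub>)) ` GA \<union> (\<lambda>b. (\<one>\<^bsub>A\<^esub>, b)) ` GB"
  have fg: "fin_gen_set ?G Gen" unfolding Gen_def by (rule dp_fin_gen[OF assms(1,2) GA GB])
  have "coarsely_connected ?G Gen P" if pc: "positive_cone ?G P" for P
  proof -
    from pc have PG: "P \<subseteq> carrier ?G" and cl: "\<forall>p\<in>P. \<forall>q\<in>P. p \<otimes>\<^bsub>?G\<^esub> q \<in> P"
      unfolding positive_cone_def by auto
    define fA :: "'a \<Rightarrow> 'a \<times> 'b" where "fA = (\<lambda>x. (x, \<one>\<^bsub>B\<^esub>))"
    define fB :: "'b \<Rightarrow> 'a \<times> 'b" where "fB = (\<lambda>x. (\<one>\<^bsub>A\<^esub>, x))"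
    define PA where "PA = {x \<in> carrier A. fA x \<in> P}"
    define PB where "PB = {x \<in> carrier B. fB x \<in> P}"
    have pcA: "positive_cone A PA" unfolding PA_def
      by (rule restrict_cone[OF G.is_group assms(1) pc]) (auto simp: fA_def)
    have pcB: "positive_cone B PB" unfolding PB_def
      by (rule restrict_cone[OF G.is_group assms(2) pc]) (auto simp: fB_def)
    obtain rA where rA: "\<forall>p\<in>PA. \<forall>q\<in>PA. \<exists>ps. ps \<noteq> [] \<and> hd ps = p \<and> last ps = q \<and> set ps \<subseteq> PA
      \<and> (\<forall>i. Suc i < length ps \<longrightarrow> word_dist A GA (ps ! i) (ps ! Suc i) \<le> rA)"
      using ccA[OF pcA] unfolding coarsely_connected_def by blast
    obtain rB where rB: "\<forall>p\<in>PB. \<forall>q\<in>PB. \<exists>ps. ps \<noteq> [] \<and> hd ps = p \<and> last ps = q \<and> set ps \<subseteq> PB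
      \<and> (\<forall>i. Suc i < length ps \<longrightarrow> word_dist B GB (ps ! i) (ps ! Suc i) \<le> rB)"
      using ccB[OF pcB] unfolding coarsely_connected_def by blast
    define a0 where "a0 = (SOME x. x \<in> PA)"
    define b0 where "b0 = (SOME x. x \<in> PB)"
    define R where "R = 1 + rA + rB + word_dist ?G Gen \<one>\<^bsub>?G\<^esub> (fA a0) + word_dist ?G Gen (fA a0) \<one>\<^bsub>?G\<^esub>
       + word_dist ?G Gen \<one>\<^bsub>?G\<^esub> (fB b0) + word_dist ?G Gen (fB b0) \<one>\<^bsub>?G\<^esub>"
    have fdA: "\<forall>x\<in>PA. \<forall>y\<in>PA. word_dist ?G Gen (fA x) (fA y) \<le> word_dist A GA x y"
    proof (intro ballI)
      fix x y assume "x \<in> PA" "y \<in> PA"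
      then have xy: "x \<in> carrier A" "y \<in> carrier A" unfolding PA_def by auto
      have "inv\<^bsub>?G\<^esub> (fA x) \<otimes>\<^bsub>?G\<^esub> fA y = (inv\<^bsub>A\<^esub> x \<otimes>\<^bsub>A\<^esub> y, \<one>\<^bsub>B\<^esub>)"
        using xy assms(1,2) by (simp add: fA_def)
      then show "word_dist ?G Gen (fA x) (fA y) \<le> word_dist A GA x y"
        unfolding word_dist_def Gen_def using wl_left[OF assms(1,2) GA, of "inv\<^bsub>A\<^esub> x \<otimes>\<^bsub>A\<^esub> y" GB] xy by simp
    qed
    have fdB: "\<forall>x\<in>PB. \<forall>y\<in>PB. word_dist ?G Gen (fB x) (fB y) \<le> word_dist B GB x y"
    proof (intro ballI)
      fix x y assume "x \<in> PB" "y \<in> PB"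
      then have xy: "x \<in> carrier B" "y \<in> carrier B" unfolding PB_def by auto
      have "inv\<^bsub>?G\<^esub> (fB x) \<otimes>\<^bsub>?G\<^esub> fB y = (\<one>\<^bsub>A\<^esub>, inv\<^bsub>B\<^esub> x \<otimes>\<^bsub>B\<^esub> y)"
        using xy assms(1,2) by (simp add: fB_def)
      then show "word_dist ?G Gen (fB x) (fB y) \<le> word_dist B GB x y"
        unfolding word_dist_def Gen_def using wl_right[OF assms(1,2) GB, of "inv\<^bsub>B\<^esub> x \<otimes>\<^bsub>B\<^esub> y" GA] xy by simp
    qed
    have mvA: "reach ?G Gen P R h (h \<otimes>\<^bsub>?G\<^esub> fA c) \<and> reach ?G Gen P R (h \<otimes>\<^bsub>?G\<^esub> fA c) h"
      if h: "h \<in> P" and c: "c \<in> PA \<or> c = \<one>\<^bsub>A\<^esub>" for h c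
    proof (cases "c = \<one>\<^bsub>A\<^esub>")
      case True
      then have "h \<otimes>\<^bsub>?G\<^esub> fA c = h" using h PG by (auto simp: fA_def)
      then show ?thesis using h by (auto intro: reach.rrefl)
    next
      case False
      then have c: "c \<in> PA" using c by auto
      then have a0: "a0 \<in> PA" unfolding a0_def by (rule someI)
      show ?thesis
      proof -
        have fPX: "\<forall>x\<in>PA. fA x \<in> P" by (simp add: PA_def)
        have R1: "rA \<le> R" "word_dist ?G Gen \<one>\<^bsub>?G\<^esub> (fA a0) \<le> R" "word_dist ?G Gen (fA a0) \<one>\<^bsub>?G\<^esub> \<le> R"
          unfolding R_def by linarith+
        note mv = move[where G="?G" and Gen=Gen and P=P and PH=PA and f=fA and H=A and GH=GA and rH=rA and R=R and ee=a0 and g=h and c=c]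
        show ?thesis
          apply (rule mv)
          apply (rule G.is_group)
          apply (rule cl)
          apply (rule PG)
          apply (rule fPX)
          apply (rule fdA)
          apply (rule rA)
          apply (rule R1(1))
          apply (rule a0)
          apply (rule R1(2))
          apply (rule R1(3))
          apply (rule h)
          apply (rule c)
          done
      qed
    qed
    have mvB: "reach ?G Gen P R h (h \<otimes>\<^bsub>?G\<^esub> fB c) \<and> reach ?G Gen P R (h \<otimes>\<^bsub>?G\<^esub> fB c) h"
      if h: "h \<in> P" and c: "c \<in> PB \<or> c = \<one>\<^bsub>B\<^esub>" for h c
    proof (cases "c = \<one>\<^bsub>B\<^esub>")
      case True
      then have "h \<otimes>\<^bsub>?G\<^esub> fB c = h" using h PG by (auto simp: fB_def)
      then show ?thesis using h by (auto intro: reach.rrefl)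
    next
      case False
      then have c: "c \<in> PB" using c by auto
      then have b0: "b0 \<in> PB" unfolding b0_def by (rule someI)
      show ?thesis
      proof -
        have fPX: "\<forall>x\<in>PB. fB x \<in> P" by (simp add: PB_def)
        have R1: "rB \<le> R" "word_dist ?G Gen \<one>\<^bsub>?G\<^esub> (fB b0) \<le> R" "word_dist ?G Gen (fB b0) \<one>\<^bsub>?G\<^esub> \<le> R"
          unfolding R_def by linarith+
        note mv = move[where G="?G" and Gen=Gen and P=P and PH=PB and f=fB and H=B and GH=GB and rH=rB and R=R and ee=b0 and g=h and c=c]
        show ?thesis
          apply (rule mv)
          apply (rule G.is_group)
          apply (rule cl)
          apply (rule PG)
          apply (rule fPX)
          apply (rule fdB)
          apply (rule rB)
          apply (rule R1(1))
          apply (rule b0)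
          apply (rule R1(2))
          apply (rule R1(3))
          apply (rule h)
          apply (rule c)
          done
      qed
    qed
    have "reach ?G Gen P R g g'" if g: "g \<in> P" and g': "g' \<in> P" for g g'
    proof -
      obtain a b where ab1: "g = (a, b)" by (cases g)
      obtain a' b' where ab2: "g' = (a', b')" by (cases g')
      have abc: "a \<in> carrier A" "b \<in> carrier B" "a' \<in> carrier A" "b' \<in> carrier B"
        using g g' PG ab1 ab2 by auto
      obtain u where u: "u \<in> carrier A" "u = a \<or> inv\<^bsub>A\<^esub> a \<otimes>\<^bsub>A\<^esub> u \<in> PA" "u = a' \<or> inv\<^bsub>A\<^esub> a' \<otimes>\<^bsub>A\<^esub> u \<in> PA"
        using cone_max[OF assms(1) pcA abc(1,3)] by blast
      obtain v where v: "v \<in> carrier B" "v = b \<or> inv\<^bsub>B\<^esub> b \<otimes>\<^bsub>B\<^esub> v \<in> PB" "v = b' \<or> inv\<^bsub>B\<^esub> b' \<otimes>\<^bsub>B\<^esub> v \<in> PB"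
        using cone_max[OF assms(2) pcB abc(2,4)] by blast
      have iA: "x = y \<Longrightarrow> x \<in> carrier A \<Longrightarrow> inv\<^bsub>A\<^esub> x \<otimes>\<^bsub>A\<^esub> y = \<one>\<^bsub>A\<^esub>" for x y
        by (simp add: A.l_inv)
      have iB: "x = y \<Longrightarrow> x \<in> carrier B \<Longrightarrow> inv\<^bsub>B\<^esub> x \<otimes>\<^bsub>B\<^esub> y = \<one>\<^bsub>B\<^esub>" for x y
        by (simp add: B.l_inv)
      have cA: "inv\<^bsub>A\<^esub> a \<otimes>\<^bsub>A\<^esub> u \<in> PA \<or> inv\<^bsub>A\<^esub> a \<otimes>\<^bsub>A\<^esub> u = \<one>\<^bsub>A\<^esub>"
           "inv\<^bsub>A\<^esub> a' \<otimes>\<^bsub>A\<^esub> u \<in> PA \<or> inv\<^bsub>A\<^esub> a' \<otimes>\<^bsub>A\<^esub> u = \<one>\<^bsub>A\<^esub>"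
        using u abc iA by blast+
      have cB: "inv\<^bsub>B\<^esub> b \<otimes>\<^bsub>B\<^esub> v \<in> PB \<or> inv\<^bsub>B\<^esub> b \<otimes>\<^bsub>B\<^esub> v = \<one>\<^bsub>B\<^esub>"
           "inv\<^bsub>B\<^esub> b' \<otimes>\<^bsub>B\<^esub> v \<in> PB \<or> inv\<^bsub>B\<^esub> b' \<otimes>\<^bsub>B\<^esub> v = \<one>\<^bsub>B\<^esub>"
        using v abc iB by blast+
      have sA: "x \<otimes>\<^bsub>A\<^esub> (inv\<^bsub>A\<^esub> x \<otimes>\<^bsub>A\<^esub> y) = y" if "x \<in> carrier A" "y \<in> carrier A" for x y
        using that A.m_assoc[of x "inv\<^bsub>A\<^esub> x" y, symmetric] by simp
      have sB: "x \<otimes>\<^bsub>B\<^esub> (inv\<^bsub>B\<^esub> x \<otimes>\<^bsub>B\<^esub> y) = y" if "x \<in> carrier B" "y \<in> carrier B" for x y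
        using that B.m_assoc[of x "inv\<^bsub>B\<^esub> x" y, symmetric] by simp
      have e1: "g \<otimes>\<^bsub>?G\<^esub> fA (inv\<^bsub>A\<^esub> a \<otimes>\<^bsub>A\<^esub> u) = (u, b)"
        unfolding ab1 fA_def mult_DirProd using sA[OF abc(1) u(1)] abc(2) by simp
      have e2: "g' \<otimes>\<^bsub>?G\<^esub> fA (inv\<^bsub>A\<^esub> a' \<otimes>\<^bsub>A\<^esub> u) = (u, b')"
        unfolding ab2 fA_def mult_DirProd using sA[OF abc(3) u(1)] abc(4) by simp
      have e3: "(u, b) \<otimes>\<^bsub>?G\<^esub> fB (inv\<^bsub>B\<^esub> b \<otimes>\<^bsub>B\<^esub> v) = (u, v)"
        unfolding fB_def mult_DirProd using sB[OF abc(2) v(1)] u(1) by simp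
      have e4: "(u, b') \<otimes>\<^bsub>?G\<^esub> fB (inv\<^bsub>B\<^esub> b' \<otimes>\<^bsub>B\<^esub> v) = (u, v)"
        unfolding fB_def mult_DirProd using sB[OF abc(4) v(1)] u(1) by simp
      have r1: "reach ?G Gen P R g (u, b)" using conjunct1[OF mvA[OF g cA(1)]] unfolding e1 .
      have r2: "reach ?G Gen P R (u, b') g'" using conjunct2[OF mvA[OF g' cA(2)]] unfolding e2 .
      have ub: "(u, b) \<in> P" "(u, b') \<in> P" using reach_in[OF r1] reach_in[OF r2] by auto
      have r3: "reach ?G Gen P R (u, b) (u, v)" using conjunct1[OF mvB[OF ub(1) cB(1)]] unfolding e3 .
      have r4: "reach ?G Gen P R (u, v) (u, b')" using conjunct2[OF mvB[OF ub(2) cB(2)]] unfolding e4 .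
      show ?thesis using reach_trans[OF r2 reach_trans[OF r4 reach_trans[OF r3 r1]]] .
    qed
    note allr = this
    show ?thesis unfolding coarsely_connected_def
    proof (intro exI[of _ R] conjI ballI)
      show "1 \<le> R" by (simp add: R_def)
      fix p q assume pq: "p \<in> P" "q \<in> P"
      show "\<exists>ps. ps \<noteq> [] \<and> hd ps = p \<and> last ps = q \<and> set ps \<subseteq> P
          \<and> (\<forall>i. Suc i < length ps \<longrightarrow> word_dist ?G Gen (ps ! i) (ps ! Suc i) \<le> R)"
        using reach_path[OF allr[OF pq]] .
    qed
  qed
  then show ?thesis unfolding Prieto_def using fg by blast
qed

end
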